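(* Let $G$ be a finite unipotent group scheme over an algebraically closed field $k$ of characteristic $p>0$, and suppose $A=kG$ has generators $u_1,\dots,u_n$ ($n>1$) satisfying Hypothesis H1. Then: (a) The set $\{u_1^{i_1}u_2^{i_2}\cdots u_n^{i_n} : 0\le i_j<p,\ j=1,\dots,n\}$ is a $k$-basis of $A$. (b) For each $s=1,\dots,n$, $J_s=Au_s+Au_{s+1}+\dots+Au_n$ is a two-sided ideal of $A$, and $x\,u_s^{p-1}u_{s+1}^{p-1}\cdots u_n^{p-1}=0$ for every $x\in J_s$. (c) Let $v=a_1u_1+\dots+a_nu_n$ with $a_1,\dots,a_n\in k$ and $a_i\neq 0$ for some $i<n$. If $v^p=0$, then $v^{p-1}u_n^{p-1}\neq 0$ (in particular $v^{p-1}\notin Au_n$), and the subalgebra of $A$ generated by $v$ and $u_n$ is isomorphic to $k[s,t]/(s^p,t^p)$ via $s\mapsto v$, $t\mapsto u_n$ (i.e. to the group algebra of an elementary abelian $p$-group of rank $2$).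
   Context: Hypothesis H1: $G$ is a finite unipotent group scheme and $A=kG$ is generated as a $k$-algebra by elements $u_1,\dots,u_n$, $n>1$, such that (a) $u_i^p=0$ for all $i$; (b) for each $i=1,\dots,n-1$ the image of $u_i$ is central in $A/I_i$, where $I_i$ is the two-sided ideal generated by $u_{i+1},\dots,u_n$; (c) $u_n$ is central in $A$; (d) $\dim_k A=p^n$. *)

theory Defs
  imports Main "HOL-Computational_Algebra.Polynomial"
begin

definition k_algebra :: "('k::field \<Rightarrow> 'a::ring_1 \<Rightarrow> 'a) \<Rightarrow> bool" where
  "k_algebra scale \<longleftrightarrow> vector_space scale \<and>
     (\<forall>c x y. scale c (x * y) = scale c x * y \<and> scale c (x * y) = x * scale c y)"

definition alg_closed_field :: "'k::field itself \<Rightarrow> bool" where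
  "alg_closed_field _ \<longleftrightarrow> (\<forall>q::'k poly. degree q > 0 \<longrightarrow> (\<exists>x. poly q x = 0))"

inductive_set alg_gen :: "('k::field \<Rightarrow> 'a::ring_1 \<Rightarrow> 'a) \<Rightarrow> 'a set \<Rightarrow> 'a set"
  for scale S where
  gen: "x \<in> S \<Longrightarrow> x \<in> alg_gen scale S"
| one: "1 \<in> alg_gen scale S"
| add: "x \<in> alg_gen scale S \<Longrightarrow> y \<in> alg_gen scale S \<Longrightarrow> x + y \<in> alg_gen scale S"
| mult: "x \<in> alg_gen scale S \<Longrightarrow> y \<in> alg_gen scale S \<Longrightarrow> x * y \<in> alg_gen scale S"
| scale: "x \<in> alg_gen scale S \<Longrightarrow> scale c x \<in> alg_gen scale S"

inductive_set ideal_gen :: "'a::ring_1 set \<Rightarrow> 'a set" for S where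
  gen: "x \<in> S \<Longrightarrow> x \<in> ideal_gen S"
| zero: "0 \<in> ideal_gen S"
| add: "x \<in> ideal_gen S \<Longrightarrow> y \<in> ideal_gen S \<Longrightarrow> x + y \<in> ideal_gen S"
| lmult: "x \<in> ideal_gen S \<Longrightarrow> a * x \<in> ideal_gen S"
| rmult: "x \<in> ideal_gen S \<Longrightarrow> x * a \<in> ideal_gen S"

definition two_sided_ideal :: "'a::ring_1 set \<Rightarrow> bool" where
  "two_sided_ideal I \<longleftrightarrow> 0 \<in> I \<and> (\<forall>x\<in>I. \<forall>y\<in>I. x + y \<in> I) \<and>
     (\<forall>x\<in>I. \<forall>a. a * x \<in> I \<and> x * a \<in> I)"

definition H1 :: "('k::field \<Rightarrow> 'a::ring_1 \<Rightarrow> 'a) \<Rightarrow> nat \<Rightarrow> nat \<Rightarrow> (nat \<Rightarrow> 'a) \<Rightarrow> bool" where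
  "H1 scale p n u \<longleftrightarrow>
     n > 1 \<and>
     alg_gen scale (u ` {1..n}) = UNIV \<and>
     (\<forall>i\<in>{1..n}. u i ^ p = 0) \<and>
     (\<forall>i\<in>{1..<n}. \<forall>a. u i * a - a * u i \<in> ideal_gen (u ` {i<..n})) \<and>
     (\<forall>a. u n * a = a * u n) \<and>
     vector_space.dim scale (UNIV :: 'a set) = p ^ n"

definition ord_monomial :: "(nat \<Rightarrow> 'a::ring_1) \<Rightarrow> nat \<Rightarrow> (nat \<Rightarrow> nat) \<Rightarrow> 'a" where
  "ord_monomial u n e = prod_list (map (\<lambda>j. u j ^ e j) [1..<Suc n])"

definition exps :: "nat \<Rightarrow> nat \<Rightarrow> (nat \<Rightarrow> nat) set" where
  "exps p n = {e. \<forall>j. (j \<in> {1..n} \<longrightarrow> e j < p) \<and> (j \<notin> {1..n} \<longrightarrow> e j = 0)}"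

definition Jset :: "(nat \<Rightarrow> 'a::ring_1) \<Rightarrow> nat \<Rightarrow> nat \<Rightarrow> 'a set" where
  "Jset u n s = {x. \<exists>a. x = (\<Sum>j\<in>{s..n}. a j * u j)}"

text \<open>k[s,t] is modelled as ('k poly) poly: the inner variable is s, the outer is t.\<close>
definition var_s :: "'k::field poly poly" where "var_s = [:[:0, 1:]:]"
definition var_t :: "'k::field poly poly" where "var_t = [:0, 1:]"

definition eval2 :: "('k::field \<Rightarrow> 'a::ring_1 \<Rightarrow> 'a) \<Rightarrow> 'a \<Rightarrow> 'a \<Rightarrow> 'k poly poly \<Rightarrow> 'a" where
  "eval2 scale x y f = (\<Sum>j\<le>degree f. \<Sum>i\<le>degree (coeff f j).
       scale (coeff (coeff f j) i) (x ^ i * y ^ j))"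

end

theory Submission
  imports Defs "HOL-Library.FuncSet"
begin


lemma JsetI: "x = (\<Sum>j\<in>{s..n}. a j * u j) \<Longrightarrow> x \<in> Jset u n s"
  unfolding Jset_def by blast

lemma Jset_zero: "0 \<in> Jset u n s"
  unfolding Jset_def by (rule CollectI, rule exI[of _ "\<lambda>_. 0"]) simp

lemma Jset_add: "x \<in> Jset u n s \<Longrightarrow> y \<in> Jset u n s \<Longrightarrow> x + y \<in> Jset u n s"
  unfolding Jset_def
proof clarify
  fix a b show "\<exists>c. (\<Sum>j = s..n. a j * u j) + (\<Sum>j = s..n. b j * u j) = (\<Sum>j = s..n. c j * u j)"
    by (rule exI[of _ "\<lambda>j. a j + b j"]) (simp add: sum.distrib distrib_right)
qed

lemma Jset_lmult: "x \<in> Jset u n s \<Longrightarrow> c * x \<in> Jset u n s"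
  unfolding Jset_def
proof clarify
  fix a show "\<exists>b. c * (\<Sum>j = s..n. a j * u j) = (\<Sum>j = s..n. b j * u j)"
    by (rule exI[of _ "\<lambda>j. c * a j"]) (simp add: sum_distrib_left mult.assoc)
qed

lemma Jset_gen: "j \<in> {s..n} \<Longrightarrow> u j \<in> Jset u n s"
proof -
  assume j: "j \<in> {s..n}"
  have "(\<Sum>i\<in>{s..n}. (if i = j then 1 else 0) * u i) = (\<Sum>i\<in>{s..n}. if i = j then u i else 0)"
    by (rule sum.cong) auto
  also have "\<dots> = u j" using j by simp
  finally have "u j = (\<Sum>i\<in>{s..n}. (if i = j then 1 else 0) * u i)" by simp
  then show ?thesis by (rule JsetI)
qed

lemma Jset_sum: "finite A \<Longrightarrow> (\<And>i. i \<in> A \<Longrightarrow> f i \<in> Jset u n s) \<Longrightarrow> sum f A \<in> Jset u n s"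
  by (induction A rule: finite_induct) (auto intro: Jset_zero Jset_add)

lemma Jset_mono: assumes "s \<le> s'" shows "Jset u n s' \<subseteq> Jset u n s"
proof
  fix x assume "x \<in> Jset u n s'"
  then obtain a where x: "x = (\<Sum>j\<in>{s'..n}. a j * u j)" unfolding Jset_def by blast
  have "(\<Sum>j\<in>{s..n}. (if s' \<le> j then a j else 0) * u j) = (\<Sum>j\<in>{s..n}. if j \<in> {s'..n} then a j * u j else 0)"
    by (rule sum.cong) auto
  also have "\<dots> = (\<Sum>j\<in>{s..n} \<inter> {s'..n}. a j * u j)" by (rule sum.inter_restrict[symmetric]) simp
  also have "{s..n} \<inter> {s'..n} = {s'..n}" using assms by auto
  finally have "x = (\<Sum>j\<in>{s..n}. (if s' \<le> j then a j else 0) * u j)" using x by simp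
  then show "x \<in> Jset u n s" by (rule JsetI)
qed

lemma Jset_empty: "n < s \<Longrightarrow> Jset u n s = {0}"
  unfolding Jset_def by auto

lemma Jset_split: assumes "s \<le> n"
  shows "x \<in> Jset u n s \<longleftrightarrow> (\<exists>b z. z \<in> Jset u n (Suc s) \<and> x = b * u s + z)"
proof
  assume "x \<in> Jset u n s"
  then obtain a where x: "x = (\<Sum>j\<in>{s..n}. a j * u j)" unfolding Jset_def by blast
  have "x = a s * u s + (\<Sum>j\<in>{Suc s..n}. a j * u j)" unfolding x using assms
    by (simp add: sum.atLeast_Suc_atMost)
  then show "\<exists>b z. z \<in> Jset u n (Suc s) \<and> x = b * u s + z" unfolding Jset_def by blast
next
  assume "\<exists>b z. z \<in> Jset u n (Suc s) \<and> x = b * u s + z"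
  then obtain b a where x: "x = b * u s + (\<Sum>j\<in>{Suc s..n}. a j * u j)" unfolding Jset_def by blast
  have "(\<Sum>j\<in>{s..n}. (a(s:=b)) j * u j) = b * u s + (\<Sum>j\<in>{Suc s..n}. (a(s:=b)) j * u j)"
    using assms by (simp add: sum.atLeast_Suc_atMost)
  also have "(\<Sum>j\<in>{Suc s..n}. (a(s:=b)) j * u j) = (\<Sum>j\<in>{Suc s..n}. a j * u j)"
    by (rule sum.cong) auto
  finally have "x = (\<Sum>j\<in>{s..n}. (a(s:=b)) j * u j)" using x by simp
  then show "x \<in> Jset u n s" by (rule JsetI)
qed

lemma ideal_gen_sub: "two_sided_ideal I \<Longrightarrow> S \<subseteq> I \<Longrightarrow> ideal_gen S \<subseteq> I"
proof
  fix x assume I: "two_sided_ideal I" and S: "S \<subseteq> I" and "x \<in> ideal_gen S"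
  from \<open>x \<in> ideal_gen S\<close> show "x \<in> I"
    by (induction rule: ideal_gen.induct) (use I S in \<open>auto simp: two_sided_ideal_def\<close>)
qed

lemma Jset_ideal:
  assumes hyp: "H1 scale p n u" and s1: "1 \<le> s"
  shows "two_sided_ideal (Jset u n s)"
  using s1
proof (induction "Suc n - s" arbitrary: s rule: less_induct)
  case less
  show ?case
  proof (cases "n < s")
    case True then show ?thesis by (simp add: Jset_empty two_sided_ideal_def)
  next
    case False
    hence sn: "s \<le> n" by simp
    have IH: "two_sided_ideal (Jset u n (Suc s))" using less sn by (intro less(1)) auto
    have sub: "Jset u n (Suc s) \<subseteq> Jset u n s" by (rule Jset_mono) simp
    have rm: "x * c \<in> Jset u n s" if x: "x \<in> Jset u n s" for x c
    proof -
      obtain a where xa: "x = (\<Sum>j\<in>{s..n}. a j * u j)" using x unfolding Jset_def by blast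
      have "a j * u j * c \<in> Jset u n s" if j: "j \<in> {s..n}" for j
      proof -
        obtain d where d: "d \<in> Jset u n (Suc s)" and ud: "u j * c = c * u j + d"
        proof (cases "j = n")
          case True
          then have "u j * c = c * u j + 0" using hyp unfolding H1_def by simp
          then show ?thesis using that Jset_zero by blast
        next
          case False
          then have "j \<in> {1..<n}" using j less(2) by auto
          then have "u j * c - c * u j \<in> ideal_gen (u ` {j<..n})" using hyp unfolding H1_def by blast
          moreover have "ideal_gen (u ` {j<..n}) \<subseteq> Jset u n (Suc s)"
            using j by (intro ideal_gen_sub[OF IH]) (auto intro!: Jset_gen)
          ultimately have "u j * c - c * u j \<in> Jset u n (Suc s)" by blast
          then show ?thesis using that[of "u j * c - c * u j"] by simp
        qed
        have "a j * u j * c = (a j * c) * u j + a j * d" using ud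
          by (simp add: mult.assoc distrib_left)
        moreover have "(a j * c) * u j \<in> Jset u n s" using j by (intro Jset_lmult Jset_gen)
        moreover have "a j * d \<in> Jset u n s" using d sub by (intro Jset_lmult) blast
        ultimately show ?thesis by (simp add: Jset_add)
      qed
      then show ?thesis unfolding xa sum_distrib_right by (intro Jset_sum) auto
    qed
    show ?thesis unfolding two_sided_ideal_def using rm by (auto intro: Jset_zero Jset_add Jset_lmult)
  qed
qed


definition peval :: "('c::zero \<Rightarrow> 'a::ring_1) \<Rightarrow> 'a \<Rightarrow> 'c poly \<Rightarrow> 'a" where
  "peval \<psi> z q = (\<Sum>i\<le>degree q. \<psi> (coeff q i) * z ^ i)"

lemma peval_bound:
  assumes "\<psi> 0 = 0" "degree q < N"
  shows "peval \<psi> z q = (\<Sum>i<N. \<psi> (coeff q i) * z ^ i)"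
  unfolding peval_def
  by (rule sum.mono_neutral_left) (use assms in \<open>auto simp: coeff_eq_0\<close>)

lemma peval_pCons:
  assumes "\<psi> 0 = 0"
  shows "peval \<psi> z (pCons a q) = \<psi> a + peval \<psi> z q * z"
proof -
  define d where "d = degree q"
  have "degree (pCons a q) < Suc (Suc d)" using degree_pCons_le[of a q] unfolding d_def by simp
  then have "peval \<psi> z (pCons a q) = (\<Sum>i<Suc (Suc d). \<psi> (coeff (pCons a q) i) * z ^ i)"
    by (rule peval_bound[where \<psi>=\<psi>, OF assms])
  also have "\<dots> = \<psi> a + (\<Sum>i<Suc d. \<psi> (coeff q i) * z ^ Suc i)"
    by (subst sum.lessThan_Suc_shift) simp
  also have "(\<Sum>i<Suc d. \<psi> (coeff q i) * z ^ Suc i) = (\<Sum>i<Suc d. \<psi> (coeff q i) * z ^ i) * z"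
    by (simp add: sum_distrib_right mult.assoc power_Suc2 del: power_Suc sum.lessThan_Suc)
  also have "(\<Sum>i<Suc d. \<psi> (coeff q i) * z ^ i) = peval \<psi> z q"
    by (rule peval_bound[where \<psi>=\<psi>, OF assms, symmetric]) (simp add: d_def)
  finally show ?thesis .
qed

lemma peval_0: "\<psi> 0 = 0 \<Longrightarrow> peval \<psi> z 0 = 0"
  unfolding peval_def by simp

lemma peval_const: "peval \<psi> z [:c:] = \<psi> c"
  unfolding peval_def by simp

lemma peval_add:
  assumes z: "\<psi> 0 = 0" and a: "\<And>c d. \<psi> (c + d) = \<psi> c + \<psi> d"
  shows "peval \<psi> z ((p::'c::comm_monoid_add poly) + q) = peval \<psi> z p + peval \<psi> z q"
proof -
  define N where "N = Suc (max (degree p) (degree q))"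
  have "degree (p + q) < N" using degree_add_le_max[of p q] unfolding N_def by simp
  moreover have "degree p < N" "degree q < N" unfolding N_def by auto
  ultimately show ?thesis
    by (simp add: peval_bound[where \<psi>=\<psi>, OF z] a distrib_right sum.distrib)
qed

lemma peval_smult:
  assumes z: "\<psi> 0 = 0" and m: "\<And>c d. \<psi> (c * d) = \<psi> c * \<psi> d"
  shows "peval \<psi> z (smult c (q::'c::comm_semiring_0 poly)) = \<psi> c * peval \<psi> z q"
proof -
  have "degree (smult c q) < Suc (degree q)" using degree_smult_le[of c q] by simp
  then show ?thesis
    by (simp add: peval_bound[where \<psi>=\<psi> and N="Suc (degree q)", OF z] m sum_distrib_left mult.assoc del: sum.lessThan_Suc)
qed

lemma peval_comm:
  assumes z: "\<psi> 0 = 0" and c: "\<And>c. w * \<psi> c = \<psi> c * w" and wz: "w * z = z * w"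
  shows "w * peval \<psi> z q = peval \<psi> z q * w"
proof (induction q)
  case 0 then show ?case by (simp add: peval_0[where \<psi>=\<psi>, OF z])
next
  case (pCons a q)
  have "w * peval \<psi> z (pCons a q) = w * \<psi> a + (w * peval \<psi> z q) * z"
    by (simp add: peval_pCons[where \<psi>=\<psi>, OF z] distrib_left mult.assoc)
  also have "\<dots> = \<psi> a * w + peval \<psi> z q * (w * z)" by (simp add: c pCons.IH mult.assoc)
  also have "\<dots> = (\<psi> a + peval \<psi> z q * z) * w" by (simp add: wz distrib_right mult.assoc)
  finally show ?case by (simp add: peval_pCons[where \<psi>=\<psi>, OF z] z)
qed

lemma peval_mult:
  assumes z: "\<psi> 0 = 0" and a: "\<And>c d. \<psi> (c + d) = \<psi> c + \<psi> d"
    and m: "\<And>c d. \<psi> (c * d) = \<psi> c * \<psi> d" and c: "\<And>c. z * \<psi> c = \<psi> c * z"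
  shows "peval \<psi> z ((p::'c::comm_ring_1 poly) * q) = peval \<psi> z p * peval \<psi> z q"
proof (induction p)
  case 0 then show ?case by (simp add: peval_0[where \<psi>=\<psi>, OF z])
next
  case (pCons b p)
  have zq: "z * peval \<psi> z q = peval \<psi> z q * z" by (rule peval_comm[where \<psi>=\<psi>, OF z c]) simp
  have "peval \<psi> z (pCons b p * q) = \<psi> b * peval \<psi> z q + peval \<psi> z (p * q) * z"
    by (simp add: mult_pCons_left peval_add[where \<psi>=\<psi>, OF z a] peval_smult[where \<psi>=\<psi>, OF z m] peval_pCons[where \<psi>=\<psi>, OF z] z)
  also have "\<dots> = \<psi> b * peval \<psi> z q + peval \<psi> z p * (z * peval \<psi> z q)"
    by (simp add: pCons.IH zq mult.assoc)
  also have "\<dots> = (\<psi> b + peval \<psi> z p * z) * peval \<psi> z q"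
    by (simp add: distrib_right mult.assoc)
  finally show ?case by (simp add: peval_pCons[where \<psi>=\<psi>, OF z] z)
qed

locale kalg = vector_space scale for scale :: "'k::field \<Rightarrow> 'a::ring_1 \<Rightarrow> 'a" +
  assumes compl: "\<And>c x y. scale c (x * y) = scale c x * y"
    and compr: "\<And>c x y. scale c (x * y) = x * scale c y"
begin

lemma sc_l: "scale c x = scale c 1 * x"
  using compl[of c 1 x] by simp
lemma sc_r: "scale c x = x * scale c 1"
  using compr[of c x 1] by simp
lemma sc_comm: "scale c 1 * x = x * scale c 1"
proof -
  have "scale c 1 * x = scale c x" by (rule sc_l[symmetric])
  also have "\<dots> = x * scale c 1" by (rule sc_r)
  finally show ?thesis .
qed
lemma sc_mult: "scale (c * d) 1 = scale c 1 * scale d 1"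
proof -
  have "scale (c * d) 1 = scale c (1 * scale d 1)" by simp
  also have "\<dots> = scale c 1 * scale d 1" by (rule compl)
  finally show ?thesis .
qed
lemma sc_add: "scale (c + d) 1 = scale c 1 + scale d 1"
  by (simp add: scale_left_distrib)

definition phi :: "'a \<Rightarrow> 'k poly \<Rightarrow> 'a" where "phi x = peval (\<lambda>c. scale c 1) x"

lemma phi_0: "phi x 0 = 0" unfolding phi_def by (simp add: peval_0)
lemma phi_add: "phi x (p + q) = phi x p + phi x q"
  unfolding phi_def by (rule peval_add) (simp_all add: sc_add)
lemma phi_mult: "phi x (p * q) = phi x p * phi x q"
  unfolding phi_def
  by (rule peval_mult, simp, rule sc_add, rule sc_mult, rule sc_comm[symmetric])
lemma phi_comm: "w * x = x * w \<Longrightarrow> w * phi x q = phi x q * w"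
  unfolding phi_def by (rule peval_comm, simp, rule sc_comm[symmetric])
lemma phi_1: "phi x 1 = 1" unfolding phi_def peval_def by simp
lemma phi_const: "phi x [:c:] = scale c 1"
  unfolding phi_def by (simp add: peval_const)
lemma phi_X: "phi x [:0, 1:] = x"
  unfolding phi_def by (simp add: peval_pCons peval_const)

definition E :: "'a \<Rightarrow> 'a \<Rightarrow> 'k poly poly \<Rightarrow> 'a" where "E x y = peval (phi x) y"

lemma eval2_E: "eval2 scale x y f = E x y f"
  unfolding eval2_def E_def peval_def phi_def
proof (rule sum.cong[OF refl])
  fix j
  have "(\<Sum>i\<le>degree (coeff f j). scale (coeff (coeff f j) i) (x ^ i * y ^ j))
      = (\<Sum>i\<le>degree (coeff f j). scale (coeff (coeff f j) i) 1 * (x ^ i * y ^ j))"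
    by (rule sum.cong[OF refl]) (rule sc_l)
  also have "\<dots> = (\<Sum>i\<le>degree (coeff f j). scale (coeff (coeff f j) i) 1 * x ^ i) * y ^ j"
    by (simp add: sum_distrib_right mult.assoc)
  finally show "(\<Sum>i\<le>degree (coeff f j). scale (coeff (coeff f j) i) (x ^ i * y ^ j))
      = (\<Sum>i\<le>degree (coeff f j). scale (coeff (coeff f j) i) 1 * x ^ i) * y ^ j" .
qed

context
  fixes x y :: 'a assumes xy: "x * y = y * x"
begin

lemma E_add: "E x y (f + g) = E x y f + E x y g"
  unfolding E_def by (rule peval_add) (simp_all add: phi_0 phi_add)
lemma E_mult: "E x y (f * g) = E x y f * E x y g"
  unfolding E_def by (rule peval_mult) (simp_all add: phi_0 phi_add phi_mult phi_comm[OF xy[symmetric]])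
lemma E_1: "E x y 1 = 1"
  unfolding E_def by (simp add: peval_def phi_1)
lemma E_s: "E x y var_s = x"
  unfolding E_def var_s_def by (simp add: peval_const phi_X)
lemma E_t: "E x y var_t = y"
  unfolding E_def var_t_def by (simp add: peval_pCons peval_const phi_0 phi_1)
lemma E_const: "E x y [:[:c:]:] = scale c 1"
  unfolding E_def by (simp add: peval_const phi_const)
lemma E_pow: "E x y (f ^ k) = E x y f ^ k"
  by (induction k) (simp_all add: E_1 E_mult)

end
end


lemma const_pow: "[:c:] ^ k = [:c ^ k:]"
  by (induction k) (simp_all add: mult.commute)

lemma varX_pow: "([:0, 1:] :: 'c::comm_ring_1 poly) ^ k = monom 1 k"
  by (simp add: monom_altdef)

lemma var_s_pow: "(var_s :: 'k::field poly poly) ^ k = [:monom 1 k:]"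
  unfolding var_s_def by (simp add: const_pow varX_pow)

lemma var_t_pow: "(var_t :: 'k::field poly poly) ^ k = monom 1 k"
  unfolding var_t_def by (simp add: varX_pow)

lemma mono_split: "monom (monom (c::'k::field) i) j = [:[:c:]:] * var_s ^ i * var_t ^ j"
  by (simp add: var_s_pow var_t_pow smult_monom mult_monom monom_0[symmetric] flip: monom_0)

lemma mono_s: "monom (monom (c::'k::field) (k + p)) j = var_s ^ p * monom (monom c k) j"
  by (simp add: var_s_pow smult_monom mult_monom add.commute)

lemma mono_t: "monom (monom (c::'k::field) i) (k + p) = var_t ^ p * monom (monom c i) k"
  by (simp add: var_t_pow mult_monom add.commute)

lemma ideal_gen_sum: "finite A \<Longrightarrow> (\<And>i. i \<in> A \<Longrightarrow> f i \<in> ideal_gen S) \<Longrightarrow> sum f A \<in> ideal_gen S"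
  by (induction A rule: finite_induct) (auto intro: ideal_gen.intros)

context kalg
begin

lemma alg_gen_zero: "0 \<in> alg_gen scale S"
proof -
  have "scale 0 1 \<in> alg_gen scale S" by (rule alg_gen.scale, rule alg_gen.one)
  then show ?thesis by simp
qed

lemma alg_gen_sum: "finite A \<Longrightarrow> (\<And>i. i \<in> A \<Longrightarrow> f i \<in> alg_gen scale S) \<Longrightarrow> sum f A \<in> alg_gen scale S"
  by (induction A rule: finite_induct) (auto intro: alg_gen.intros alg_gen_zero)

lemma alg_gen_pow: "x \<in> alg_gen scale S \<Longrightarrow> x ^ k \<in> alg_gen scale S"
  by (induction k) (auto intro: alg_gen.intros)

context
  fixes x y :: 'a and p :: nat
  assumes xy: "x * y = y * x" and xp: "x ^ p = 0" and yp: "y ^ p = 0"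
    and nz: "x ^ (p - 1) * y ^ (p - 1) \<noteq> 0" and p1: "1 \<le> p"
begin

lemma pow_comm: "y ^ j * x ^ a = x ^ a * y ^ j"
  by (metis power_commuting_commutes xy)

lemma xpow0: "p \<le> a \<Longrightarrow> x ^ a = 0"
  by (metis le_add_diff_inverse mult_zero_left power_add xp)
lemma ypow0: "p \<le> a \<Longrightarrow> y ^ a = 0"
  by (metis le_add_diff_inverse mult_zero_left power_add yp)

lemma indep:
  assumes s: "(\<Sum>j<p. \<Sum>i<p. scale (c j i) (x ^ i * y ^ j)) = 0"
    and ij: "i < p" "j < p"
  shows "c j i = 0"
proof (rule ccontr)
  assume cne: "c j i \<noteq> 0"
  define P where "P i' \<longleftrightarrow> i' < p \<and> (\<exists>j'<p. c j' i' \<noteq> 0)" for i'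
  define i0 where "i0 = (LEAST i'. P i')"
  have Pi: "P i" unfolding P_def using ij cne by blast
  have Pi0: "P i0" unfolding i0_def by (rule LeastI[of P, OF Pi])
  have i0min: "\<And>i'. P i' \<Longrightarrow> i0 \<le> i'" unfolding i0_def by (rule Least_le)
  define Q where "Q j' \<longleftrightarrow> j' < p \<and> c j' i0 \<noteq> 0" for j'
  define j0 where "j0 = (LEAST j'. Q j')"
  have "\<exists>j'. Q j'" using Pi0 unfolding P_def Q_def by blast
  then have Qj0: "Q j0" unfolding j0_def by (metis LeastI)
  have j0min: "\<And>j'. Q j' \<Longrightarrow> j0 \<le> j'" unfolding j0_def by (rule Least_le)
  have i0p: "i0 < p" and j0p: "j0 < p" and c0: "c j0 i0 \<noteq> 0"
    using Pi0 Qj0 unfolding P_def Q_def by auto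
  define m where "m = x ^ (p - 1 - i0) * y ^ (p - 1 - j0)"
  have tm: "scale (c j' i') (x ^ i' * y ^ j') * m =
      (if j' = j0 then (if i' = i0 then scale (c j0 i0) (x ^ (p - 1) * y ^ (p - 1)) else 0) else 0)"
    if ip: "i' < p" and jp: "j' < p" for i' j'
  proof -
    have eq: "scale (c j' i') (x ^ i' * y ^ j') * m
        = scale (c j' i') (x ^ (i' + (p - 1 - i0)) * y ^ (j' + (p - 1 - j0)))"
    proof -
      have yx: "y ^ j' * (x ^ a * y ^ b) = x ^ a * (y ^ j' * y ^ b)" for a b
        by (metis mult.assoc pow_comm)
      show ?thesis unfolding m_def compl[symmetric]
        by (simp only: power_add mult.assoc yx)
    qed
    show ?thesis
    proof (cases "c j' i' = 0")
      case True
      then show ?thesis using c0 by auto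
    next
      case False
      then have "P i'" using ip jp unfolding P_def by blast
      then have "i0 \<le> i'" by (rule i0min)
      show ?thesis
      proof (cases "i' = i0")
        case False
        then have "p \<le> i' + (p - 1 - i0)" using \<open>i0 \<le> i'\<close> i0p by linarith
        then show ?thesis using eq xpow0 False by simp
      next
        case True
        then have "Q j'" using \<open>c j' i' \<noteq> 0\<close> jp unfolding Q_def by simp
        then have "j0 \<le> j'" by (rule j0min)
        show ?thesis
        proof (cases "j' = j0")
          case True
          then show ?thesis using eq \<open>i' = i0\<close> i0p j0p by simp
        next
          case False
          then have "p \<le> j' + (p - 1 - j0)" using \<open>j0 \<le> j'\<close> j0p by linarith
          then show ?thesis using eq ypow0 False by simp
        qed
      qed
    qed
  qed
  have "0 = (\<Sum>j<p. \<Sum>i<p. scale (c j i) (x ^ i * y ^ j)) * m" using s by simp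
  also have "\<dots> = (\<Sum>j'<p. \<Sum>i'<p. scale (c j' i') (x ^ i' * y ^ j') * m)"
    by (simp add: sum_distrib_right)
  also have "\<dots> = (\<Sum>j'<p. \<Sum>i'<p. (if j' = j0 then (if i' = i0 then scale (c j0 i0) (x ^ (p - 1) * y ^ (p - 1)) else 0) else 0))"
    by (intro sum.cong refl) (simp add: tm)
  also have "\<dots> = scale (c j0 i0) (x ^ (p - 1) * y ^ (p - 1))"
  proof -
    define K where "K = scale (c j0 i0) (x ^ (p - 1) * y ^ (p - 1))"
    have inner: "(\<Sum>i'<p. (if j' = j0 then (if i' = i0 then K else 0) else 0)) = (if j' = j0 then K else 0)" for j'
      by (cases "j' = j0") (simp_all add: i0p)
    have "(\<Sum>j'<p. \<Sum>i'<p. (if j' = j0 then (if i' = i0 then K else 0) else 0)) = K"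
      by (simp only: inner) (simp add: j0p)
    then show ?thesis unfolding K_def .
  qed
  finally show False using c0 nz by simp
qed

lemma E_0: "E x y 0 = 0"
  unfolding E_def by (rule peval_0) (rule phi_0)

lemma E_sum: "E x y (sum f A) = (\<Sum>a\<in>A. E x y (f a))"
  by (induction A rule: infinite_finite_induct) (simp_all add: E_0 E_add[OF xy])

lemma E_monom: "E x y (monom (monom c i) j) = scale c (x ^ i * y ^ j)"
proof -
  have "E x y (monom (monom c i) j) = scale c 1 * (x ^ i * y ^ j)"
    by (simp only: mono_split E_mult[OF xy] E_const[OF xy] E_pow[OF xy] E_s[OF xy] E_t[OF xy] mult.assoc)
  then show ?thesis by (simp only: sc_l[of c "x ^ i * y ^ j", symmetric])
qed

lemma E_range: "range (E x y) = alg_gen scale {x, y}"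
proof
  show "range (E x y) \<subseteq> alg_gen scale {x, y}"
  proof clarify
    fix f
    have "E x y f = eval2 scale x y f" by (rule eval2_E[symmetric])
    also have "\<dots> \<in> alg_gen scale {x, y}" unfolding eval2_def
      by (intro alg_gen_sum alg_gen.scale alg_gen.mult alg_gen_pow) (auto intro: alg_gen.gen)
    finally show "E x y f \<in> alg_gen scale {x, y}" .
  qed
next
  show "alg_gen scale {x, y} \<subseteq> range (E x y)"
  proof
    fix w assume "w \<in> alg_gen scale {x, y}"
    then show "w \<in> range (E x y)"
    proof (induction rule: alg_gen.induct)
      case (gen w)
      then show ?case using E_s[OF xy] E_t[OF xy] by (metis insert_iff rangeI singletonD)
    next
      case one then show ?case using E_1[OF xy] by (metis rangeI)
    next
      case (add a b)
      then obtain f g where "a = E x y f" "b = E x y g" by blast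
      then show ?case using E_add[OF xy, of f g] by (metis rangeI)
    next
      case (mult a b)
      then obtain f g where "a = E x y f" "b = E x y g" by blast
      then show ?case using E_mult[OF xy, of f g] by (metis rangeI)
    next
      case (scale a c)
      then obtain f where "a = E x y f" by blast
      then have "scale c a = E x y ([:[:c:]:] * f)"
        by (simp only: E_mult[OF xy] E_const[OF xy]) (rule sc_l)
      then show ?case by (metis rangeI)
    qed
  qed
qed

end
end


context kalg
begin

context
  fixes x y :: 'a and p :: nat
  assumes xy: "x * y = y * x" and xp: "x ^ p = 0" and yp: "y ^ p = 0"
    and nz: "x ^ (p - 1) * y ^ (p - 1) \<noteq> 0" and p1: "1 \<le> p"
begin

lemma ker_sup: "g \<in> ideal_gen {var_s ^ p, var_t ^ p} \<Longrightarrow> E x y g = 0"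
proof (induction rule: ideal_gen.induct)
  case (gen w)
  then show ?case using E_pow[OF xy] E_s[OF xy] E_t[OF xy] xp yp by auto
next
  case zero then show ?case by (rule E_0[OF xy xp yp nz p1])
next
  case (add a b) then show ?case by (simp add: E_add[OF xy])
next
  case (lmult a c) then show ?case by (simp add: E_mult[OF xy])
next
  case (rmult a c) then show ?case by (simp add: E_mult[OF xy])
qed

lemma sum_restrict_lt: "p \<le> N \<Longrightarrow> (\<Sum>i<N. if i < p then g i else 0) = (\<Sum>i<p. g i)"
proof -
  assume "p \<le> N"
  then have "{i \<in> {..<N}. i < p} = {..<p}" by auto
  then show ?thesis by (metis (no_types) finite_lessThan sum.inter_filter)
qed

lemma E_ker: "{f. E x y f = 0} = ideal_gen {var_s ^ p, var_t ^ p}"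
proof
  show "ideal_gen {var_s ^ p, var_t ^ p} \<subseteq> {f. E x y f = 0}" using ker_sup by blast
next
  show "{f. E x y f = 0} \<subseteq> ideal_gen {var_s ^ p, var_t ^ p}"
  proof clarify
    fix f assume Ef: "E x y f = 0"
    define M where "M j i = monom (monom (coeff (coeff f j) i) i) j" for j i
    define m where "m = degree f + (\<Sum>j\<le>degree f. degree (coeff f j)) + p"
    define N where "N = Suc m"
    have pN: "p \<le> N" unfolding N_def m_def by simp
    have degc: "degree (coeff f j) \<le> m" for j
    proof (cases "j \<le> degree f")
      case True
      then have "degree (coeff f j) \<le> (\<Sum>j\<le>degree f. degree (coeff f j))"
        by (intro member_le_sum) auto
      then show ?thesis unfolding m_def by simp
    next
      case False then show ?thesis by (simp add: coeff_eq_0)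
    qed
    have degf: "degree f \<le> m" unfolding m_def by simp
    have f1: "f = (\<Sum>j<N. monom (coeff f j) j)"
      unfolding N_def lessThan_Suc_atMost by (rule poly_as_sum_of_monoms'[OF degf, symmetric])
    have f2: "coeff f j = (\<Sum>i<N. monom (coeff (coeff f j) i) i)" for j
      unfolding N_def lessThan_Suc_atMost by (rule poly_as_sum_of_monoms'[OF degc, symmetric])
    have fM: "f = (\<Sum>j<N. \<Sum>i<N. M j i)"
      unfolding M_def by (subst f1) (simp only: f2[symmetric] monom_sum[symmetric])
    define L where "L = (\<Sum>j<p. \<Sum>i<p. M j i)"
    define H where "H = (\<Sum>j<N. \<Sum>i<N. if i < p \<and> j < p then 0 else M j i)"
    have split: "M j i = (if i < p \<and> j < p then M j i else 0) + (if i < p \<and> j < p then 0 else M j i)" for i j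
      by simp
    have Lbig: "(\<Sum>j<N. \<Sum>i<N. if i < p \<and> j < p then M j i else 0) = L"
    proof -
      have "(\<Sum>i<N. if i < p \<and> j < p then M j i else 0) = (if j < p then (\<Sum>i<p. M j i) else 0)" for j
        by (cases "j < p") (simp_all add: sum_restrict_lt[OF pN])
      then show ?thesis unfolding L_def by (simp add: sum_restrict_lt[OF pN])
    qed
    have fLH: "f = L + H"
    proof -
      have "f = (\<Sum>j<N. \<Sum>i<N. (if i < p \<and> j < p then M j i else 0) + (if i < p \<and> j < p then 0 else M j i))"
        by (subst fM) (simp only: split[symmetric])
      also have "\<dots> = L + H" unfolding H_def Lbig[symmetric] by (simp add: sum.distrib)
      finally show ?thesis .
    qed
    have Hin: "H \<in> ideal_gen {var_s ^ p, var_t ^ p}"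
      unfolding H_def
    proof (intro ideal_gen_sum finite_lessThan)
      fix j i
      show "(if i < p \<and> j < p then 0 else M j i) \<in> ideal_gen {var_s ^ p, var_t ^ p}"
      proof (cases "i < p \<and> j < p")
        case True then show ?thesis by (simp add: ideal_gen.zero)
      next
        case False
        show ?thesis
        proof (cases "p \<le> i")
          case True
          have "M j i = var_s ^ p * monom (monom (coeff (coeff f j) i) (i - p)) j"
            unfolding M_def using mono_s[of "coeff (coeff f j) i" "i - p" p j] True by simp
          then have "M j i \<in> ideal_gen {var_s ^ p, var_t ^ p}" by (simp only:) (rule ideal_gen.rmult, rule ideal_gen.gen, simp)
          then show ?thesis using False by (auto intro: ideal_gen.zero)
        next
          case ni: False
          then have "p \<le> j" using False by auto
          then have "M j i = var_t ^ p * monom (monom (coeff (coeff f j) i) i) (j - p)"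
            unfolding M_def using mono_t[of "coeff (coeff f j) i" i "j - p" p] by simp
          then have "M j i \<in> ideal_gen {var_s ^ p, var_t ^ p}" by (simp only:) (rule ideal_gen.rmult, rule ideal_gen.gen, simp)
          then show ?thesis using False by (auto intro: ideal_gen.zero)
        qed
      qed
    qed
    have EH: "E x y H = 0" by (rule ker_sup[OF Hin])
    have "E x y L = 0" using Ef EH fLH E_add[OF xy, of L H] by simp
    then have EL: "(\<Sum>j<p. \<Sum>i<p. scale (coeff (coeff f j) i) (x ^ i * y ^ j)) = 0"
      unfolding L_def M_def by (simp add: E_sum[OF xy xp yp nz p1] E_monom[OF xy xp yp nz p1])
    have "M j i = 0" if "i < p" "j < p" for i j
      using indep[OF xy xp yp nz p1 EL that] unfolding M_def by simp
    then have "L = 0" unfolding L_def by simp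
    then show "f \<in> ideal_gen {var_s ^ p, var_t ^ p}" using fLH Hin by simp
  qed
qed

end
end


lemma card_exps: "finite (exps p n) \<and> card (exps p n) = p ^ n"
proof -
  have bij: "bij_betw (\<lambda>e. restrict e {1..n}) (exps p n) (PiE {1..n} (\<lambda>_. {..<p}))"
  proof (rule bij_betw_byWitness[where f' = "\<lambda>(f::nat \<Rightarrow> nat) j. if j \<in> {1..n} then f j else 0"])
    show "\<forall>e\<in>exps p n. (\<lambda>j. if j \<in> {1..n} then restrict e {1..n} j else 0) = e"
      unfolding exps_def by (auto simp: fun_eq_iff)
    show "\<forall>f\<in>PiE {1..n} (\<lambda>_. {..<p}). restrict (\<lambda>j. if j \<in> {1..n} then f j else 0) {1..n} = f"
      by (auto simp: fun_eq_iff PiE_def extensional_def)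
    show "(\<lambda>e. restrict e {1..n}) ` exps p n \<subseteq> PiE {1..n} (\<lambda>_. {..<p})"
      unfolding exps_def by auto
    show "(\<lambda>f j. if j \<in> {1..n} then f j else 0) ` PiE {1..n} (\<lambda>_. {..<p}) \<subseteq> exps p n"
      unfolding exps_def by (auto simp: PiE_def)
  qed
  have "finite (PiE {1..n} (\<lambda>_. {..<p}))" by (intro finite_PiE) auto
  moreover have "card (PiE {1..n} (\<lambda>_. {..<p})) = p ^ n" by (simp add: card_PiE)
  ultimately show ?thesis using bij bij_betw_finite bij_betw_same_card by metis
qed

locale h1 = kalg scale for scale :: "'k::field \<Rightarrow> 'a::ring_1 \<Rightarrow> 'a" +
  fixes p n :: nat and u :: "nat \<Rightarrow> 'a"
  assumes p2: "2 \<le> p" and hyp: "H1 scale p n u"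
begin

lemma n1: "1 < n" using hyp unfolding H1_def by simp
lemma genA: "alg_gen scale (u ` {1..n}) = UNIV" using hyp unfolding H1_def by simp
lemma up: "i \<in> {1..n} \<Longrightarrow> u i ^ p = 0" using hyp unfolding H1_def by simp
lemma cent: "u n * a = a * u n" using hyp unfolding H1_def by simp
lemma dimA: "dim (UNIV :: 'a set) = p ^ n" using hyp unfolding H1_def by simp

lemma Jid: "1 \<le> s \<Longrightarrow> two_sided_ideal (Jset u n s)" by (rule Jset_ideal[OF hyp])

lemma Jr: "1 \<le> s \<Longrightarrow> x \<in> Jset u n s \<Longrightarrow> x * c \<in> Jset u n s"
  using Jid unfolding two_sided_ideal_def by blast

definition P :: "nat \<Rightarrow> 'a" where "P s = prod_list (map (\<lambda>j. u j ^ (p - 1)) [s..<Suc n])"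

lemma P_cons: "s \<le> n \<Longrightarrow> P s = u s ^ (p - 1) * P (Suc s)"
  unfolding P_def by (simp add: upt_conv_Cons del: upt_Suc)

lemma upow: "i \<in> {1..n} \<Longrightarrow> u i * u i ^ (p - 1) = 0"
proof -
  assume i: "i \<in> {1..n}"
  have "u i * u i ^ (p - 1) = u i ^ Suc (p - 1)" by simp
  also have "Suc (p - 1) = p" using p2 by simp
  finally show ?thesis using up[OF i] by simp
qed

lemma annih: "1 \<le> s \<Longrightarrow> x \<in> Jset u n s \<Longrightarrow> x * P s = 0"
proof (induction "Suc n - s" arbitrary: s x rule: less_induct)
  case less
  show ?case
  proof (cases "n < s")
    case True then show ?thesis using less(3) by (simp add: Jset_empty)
  next
    case False
    hence sn: "s \<le> n" by simp
    have IH: "\<And>z. z \<in> Jset u n (Suc s) \<Longrightarrow> z * P (Suc s) = 0"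
      using less sn by (intro less(1)) auto
    obtain a where xa: "x = (\<Sum>j\<in>{s..n}. a j * u j)" using less(3) unfolding Jset_def by blast
    have "u j * P s = 0" if j: "j \<in> {s..n}" for j
    proof (cases "j = s")
      case True
      then show ?thesis using upow[of s] less(2) sn by (simp add: P_cons mult.assoc[symmetric])
    next
      case False
      then have "u j \<in> Jset u n (Suc s)" using j by (intro Jset_gen) auto
      then have "u j * u s ^ (p - 1) \<in> Jset u n (Suc s)" by (intro Jr) auto
      then show ?thesis using IH by (simp add: P_cons[OF sn] mult.assoc[symmetric])
    qed
    then show ?thesis unfolding xa sum_distrib_right by (simp add: mult.assoc)
  qed
qed

end


context h1
begin

definition mono :: "nat \<Rightarrow> (nat \<Rightarrow> nat) \<Rightarrow> 'a" where
  "mono s e = prod_list (map (\<lambda>j. u j ^ e j) [1..<s])"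

lemma mono_Suc: "1 \<le> s \<Longrightarrow> mono (Suc s) (e(s := m)) = mono s e * u s ^ m"
proof -
  assume s: "1 \<le> s"
  have eq: "prod_list (map (\<lambda>j. u j ^ (if j = s then m else e j)) [Suc 0..<s]) = prod_list (map (\<lambda>j. u j ^ e j) [Suc 0..<s])"
    by (rule arg_cong[where f=prod_list], rule map_cong) auto
  show ?thesis unfolding mono_def using s by (simp add: eq)
qed

lemma exps_upd: assumes "1 \<le> s" "e \<in> exps p (s - 1)" "m < p" shows "e(s := m) \<in> exps p s"
proof -
  have e: "\<And>j. (j \<in> {1..s-1} \<longrightarrow> e j < p) \<and> (j \<notin> {1..s-1} \<longrightarrow> e j = 0)"
    using assms(2) unfolding exps_def by blast
  have "(j \<in> {1..s} \<longrightarrow> (e(s := m)) j < p) \<and> (j \<notin> {1..s} \<longrightarrow> (e(s := m)) j = 0)" for j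
  proof (cases "j = s")
    case True then show ?thesis using assms by simp
  next
    case False
    then have "j \<in> {1..s} \<longleftrightarrow> j \<in> {1..s-1}" by auto
    then show ?thesis using e[of j] False by simp
  qed
  then show ?thesis unfolding exps_def by blast
qed

lemma span_rmult:
  assumes s: "1 \<le> s" and m: "m < p" and y: "y \<in> span (mono s ` exps p (s - 1))"
  shows "y * u s ^ m \<in> span (mono (Suc s) ` exps p s)"
  using y
proof (induction rule: span_induct_alt)
  case base then show ?case by (simp add: span_zero)
next
  case (step c b w)
  then obtain e where e: "e \<in> exps p (s - 1)" and b: "b = mono s e" by blast
  have "b * u s ^ m = mono (Suc s) (e(s := m))" using mono_Suc[OF s] b by simp
  moreover have "e(s := m) \<in> exps p s" by (rule exps_upd[OF s e m])
  ultimately have bin: "b * u s ^ m \<in> span (mono (Suc s) ` exps p s)" by (auto intro: span_base)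
  have eq: "(scale c b + w) * u s ^ m = scale c (b * u s ^ m) + w * u s ^ m"
    by (simp only: distrib_right compl)
  show ?case unfolding eq by (intro span_add span_scale bin step.IH)
qed

lemma C1: "\<exists>y z. y \<in> span (mono 1 ` exps p 0) \<and> z \<in> Jset u n 1 \<and> x = y + z"
proof -
  define K where "K = {x. \<exists>c z. z \<in> Jset u n 1 \<and> x = scale c 1 + z}"
  have J1: "\<And>z w. z \<in> Jset u n 1 \<Longrightarrow> w * z \<in> Jset u n 1 \<and> z * w \<in> Jset u n 1"
    using Jid[of 1] unfolding two_sided_ideal_def by auto
  have "alg_gen scale (u ` {1..n}) \<subseteq> K"
  proof
    fix x assume "x \<in> alg_gen scale (u ` {1..n})"
    then show "x \<in> K"
    proof (induction rule: alg_gen.induct)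
      case (gen x)
      then obtain i where "i \<in> {1..n}" "x = u i" by blast
      then have "u i \<in> Jset u n 1" by (intro Jset_gen) auto
      then show ?case unfolding K_def using \<open>x = u i\<close> by (intro CollectI exI[of _ 0] exI[of _ "u i"]) simp
    next
      case one
      show ?case unfolding K_def by (intro CollectI exI[of _ 1] exI[of _ 0]) (simp add: Jset_zero)
    next
      case (add x y)
      then obtain c z d w where "z \<in> Jset u n 1" "x = scale c 1 + z" "w \<in> Jset u n 1" "y = scale d 1 + w"
        unfolding K_def by blast
      then show ?case unfolding K_def
        by (intro CollectI exI[of _ "c + d"] exI[of _ "z + w"]) (simp add: Jset_add scale_left_distrib)
    next
      case (mult x y)
      then obtain c z d w where zJ: "z \<in> Jset u n 1" and x: "x = scale c 1 + z"
        and wJ: "w \<in> Jset u n 1" and y: "y = scale d 1 + w"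
        unfolding K_def by blast
      have "x * y = scale (c * d) 1 + (scale c 1 * w + z * y)"
        unfolding x y by (simp add: distrib_left distrib_right sc_mult add.assoc)
      moreover have "scale c 1 * w + z * y \<in> Jset u n 1" using J1 zJ wJ by (simp add: Jset_add)
      ultimately show ?case unfolding K_def by blast
    next
      case (scale x c)
      then obtain d z where zJ: "z \<in> Jset u n 1" and x: "x = scale d 1 + z"
        unfolding K_def by blast
      have "scale c x = scale (c * d) 1 + scale c 1 * z"
        unfolding x by (simp add: scale_right_distrib sc_l[of c z])
      moreover have "scale c 1 * z \<in> Jset u n 1" using J1 zJ by simp
      ultimately show ?case unfolding K_def by blast
    qed
  qed
  then have "x \<in> K" using genA by auto
  then obtain c z where zJ: "z \<in> Jset u n 1" and x: "x = scale c 1 + z" unfolding K_def by blast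
  have "(\<lambda>_. 0) \<in> exps p 0" unfolding exps_def by simp
  moreover have "mono 1 (\<lambda>_. 0) = 1" unfolding mono_def by simp
  ultimately have "1 \<in> mono 1 ` exps p 0" by (metis image_eqI)
  then have "scale c 1 \<in> span (mono 1 ` exps p 0)" by (intro span_scale span_base)
  then show ?thesis using zJ x by blast
qed

lemma Cstep:
  assumes s: "1 \<le> s" "s \<le> n"
    and C: "\<And>x. \<exists>y z. y \<in> span (mono s ` exps p (s - 1)) \<and> z \<in> Jset u n s \<and> x = y + z"
  shows "\<exists>y z. y \<in> span (mono (Suc s) ` exps p s) \<and> z \<in> Jset u n (Suc s) \<and> x = y + z"
proof -
  let ?S = "span (mono (Suc s) ` exps p s)"
  have D: "m \<le> p \<Longrightarrow> \<exists>y w z. y \<in> ?S \<and> z \<in> Jset u n (Suc s) \<and> x = y + w * u s ^ m + z" for m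
  proof (induction m)
    case 0
    show ?case by (intro exI[of _ 0] exI[of _ x]) (simp add: span_zero Jset_zero)
  next
    case (Suc m)
    then obtain y w z where y: "y \<in> ?S" and z: "z \<in> Jset u n (Suc s)" and x: "x = y + w * u s ^ m + z"
      by auto
    obtain y' z' where y': "y' \<in> span (mono s ` exps p (s - 1))" and z': "z' \<in> Jset u n s" and w: "w = y' + z'"
      using C by blast
    obtain b z'' where z'': "z'' \<in> Jset u n (Suc s)" and z'eq: "z' = b * u s + z''"
      using z' Jset_split[OF s(2)] by blast
    have "x = (y + y' * u s ^ m) + b * u s ^ Suc m + (z + z'' * u s ^ m)"
      unfolding x w z'eq by (simp add: distrib_right mult.assoc add_ac power_Suc)
    moreover have "y + y' * u s ^ m \<in> ?S"
      using Suc.prems by (intro span_add y span_rmult[OF s(1) _ y']) auto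
    moreover have "z + z'' * u s ^ m \<in> Jset u n (Suc s)"
      by (intro Jset_add z Jr z'') simp
    ultimately show ?case by blast
  qed
  obtain y w z where "y \<in> ?S" "z \<in> Jset u n (Suc s)" "x = y + w * u s ^ p + z"
    using D[of p] by auto
  moreover have "u s ^ p = 0" using s by (intro up) auto
  ultimately show ?thesis by auto
qed

lemma Call: "k \<le> n \<Longrightarrow> \<exists>y z. y \<in> span (mono (Suc k) ` exps p k) \<and> z \<in> Jset u n (Suc k) \<and> x = y + z"
proof (induction k arbitrary: x)
  case 0 then show ?case using C1 by simp
next
  case (Suc k)
  then show ?case using Cstep[of "Suc k"] by simp
qed

lemma spanning: "span (ord_monomial u n ` exps p n) = UNIV"
proof -
  have "mono (Suc n) = ord_monomial u n" unfolding mono_def ord_monomial_def by (simp add: fun_eq_iff)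
  moreover have "x \<in> span (mono (Suc n) ` exps p n)" for x
    using Call[of n x] by (auto simp: Jset_empty)
  ultimately show ?thesis by auto
qed

lemma basis_part:
  "\<not> dependent (ord_monomial u n ` exps p n) \<and> span (ord_monomial u n ` exps p n) = UNIV
   \<and> inj_on (ord_monomial u n) (exps p n)"
proof -
  let ?B = "ord_monomial u n ` exps p n"
  have fe: "finite (exps p n)" and ce: "card (exps p n) = p ^ n" using card_exps by auto
  have fB: "finite ?B" using fe by simp
  have cB: "card ?B \<le> p ^ n" using card_image_le[OF fe] ce by simp
  obtain B where BB: "B \<subseteq> ?B" and iB: "independent B" and sB: "?B \<subseteq> span B"
    by (rule maximal_independent_subset)
  have "span ?B \<subseteq> span B" using sB by (simp add: span_minimal subspace_span)
  then have sBU: "UNIV \<subseteq> span B" using spanning by simp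
  have "card B = dim (UNIV :: 'a set)" by (rule basis_card_eq_dim) (use iB sBU in auto)
  then have cBe: "card B = p ^ n" using dimA by simp
  have "card B \<le> card ?B" using BB fB by (simp add: card_mono)
  then have "card B = card ?B" using cB cBe by simp
  then have "B = ?B" using BB fB by (intro card_subset_eq) auto
  then have ind: "independent ?B" using iB by simp
  have "card ?B = card (exps p n)" using \<open>card B = card ?B\<close> cBe ce by simp
  then have "inj_on (ord_monomial u n) (exps p n)" by (rule eq_card_imp_inj_on[OF fe])
  then show ?thesis using ind spanning by simp
qed

end


context h1
begin

lemma ucent_pow: "u n ^ k * a = a * u n ^ k"
  by (rule power_commuting_commutes) (rule cent)

lemma partc_nz:
  assumes v: "v = (\<Sum>j\<in>{1..n}. scale (a j) (u j))" and ex: "\<exists>i\<in>{1..<n}. a i \<noteq> 0"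
  shows "v ^ (p - 1) * u n ^ (p - 1) \<noteq> 0"
proof -
  define m where "m = (LEAST i. 1 \<le> i \<and> a i \<noteq> 0)"
  obtain i where i: "i \<in> {1..<n}" "a i \<noteq> 0" using ex by blast
  have m1: "1 \<le> m" and am: "a m \<noteq> 0" unfolding m_def using LeastI[of "\<lambda>i. 1 \<le> i \<and> a i \<noteq> 0" i] i by auto
  have "m \<le> i" unfolding m_def using i by (intro Least_le) auto
  then have mn: "m < n" using i by auto
  have below: "a j = 0" if "1 \<le> j" "j < m" for j
    using not_less_Least[of j "\<lambda>i. 1 \<le> i \<and> a i \<noteq> 0"] that unfolding m_def by auto
  define r where "r = (\<Sum>j\<in>{Suc m..n}. scale (a j) (u j))"
  have rJ: "r \<in> Jset u n (Suc m)" unfolding r_def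
  proof (intro Jset_sum)
    fix j assume "j \<in> {Suc m..n}"
    then have "scale 1 1 * u j \<in> Jset u n (Suc m)" by (intro Jset_lmult Jset_gen)
    then show "scale (a j) (u j) \<in> Jset u n (Suc m)" using sc_l[of "a j" "u j"]
      by (metis Jset_lmult \<open>j \<in> {Suc m..n}\<close> Jset_gen)
  qed simp
  have vdec: "v = scale (a m) (u m) + r"
  proof -
    have "(\<Sum>j\<in>{1..n}. scale (a j) (u j)) = (\<Sum>j\<in>{1..<Suc n}. scale (a j) (u j))"
      by (simp add: atLeastLessThanSuc_atLeastAtMost)
    also have "\<dots> = (\<Sum>j\<in>{1..<m}. scale (a j) (u j)) + (\<Sum>j\<in>{m..<Suc n}. scale (a j) (u j))"
      using m1 mn by (intro sum.atLeastLessThan_concat[symmetric]) auto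
    also have "(\<Sum>j\<in>{1..<m}. scale (a j) (u j)) = 0" using below by (intro sum.neutral) auto
    also have "(\<Sum>j\<in>{m..<Suc n}. scale (a j) (u j)) = (\<Sum>j\<in>{m..n}. scale (a j) (u j))"
      by (simp add: atLeastLessThanSuc_atLeastAtMost)
    also have "\<dots> = scale (a m) (u m) + r" unfolding r_def using mn
      by (simp add: sum.atLeast_Suc_atMost)
    finally show ?thesis using v by simp
  qed
  have sm: "scale c X * scale d Y = scale (c * d) (X * Y)" for c d X Y
    by (metis compl compr scale_scale)
  have vpow: "\<exists>rk. rk \<in> Jset u n (Suc m) \<and> v ^ k = scale (a m ^ k) (u m ^ k) + rk" for k
  proof (induction k)
    case 0 then show ?case by (intro exI[of _ 0]) (simp add: Jset_zero)
  next
    case (Suc k)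
    then obtain rk where rk: "rk \<in> Jset u n (Suc m)" and vk: "v ^ k = scale (a m ^ k) (u m ^ k) + rk" by blast
    have "v ^ Suc k = (scale (a m ^ k) (u m ^ k) + rk) * (scale (a m) (u m) + r)"
      by (simp only: power_Suc2 vk vdec[symmetric])
    also have "\<dots> = scale (a m ^ Suc k) (u m ^ Suc k) + (scale (a m ^ k) (u m ^ k) * r + rk * v)"
      by (simp add: distrib_left distrib_right sm vdec add_ac mult.commute[of "a m ^ k"] power_commutes)
    finally show ?case using rk rJ
      by (intro exI[of _ "scale (a m ^ k) (u m ^ k) * r + rk * v"]) (simp add: Jset_add Jset_lmult Jr)
  qed
  then obtain r' where r': "r' \<in> Jset u n (Suc m)" and vp: "v ^ (p - 1) = scale (a m ^ (p - 1)) (u m ^ (p - 1)) + r'"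
    by blast
  define Q where "Q = prod_list (map (\<lambda>j. u j ^ (p - 1)) [Suc m..<n])"
  have PQ: "P (Suc m) = Q * u n ^ (p - 1)" unfolding P_def Q_def using mn by simp
  have Pm: "P m = u m ^ (p - 1) * P (Suc m)" using mn by (intro P_cons) simp
  define e where "e j = (if m \<le> j \<and> j \<le> n then p - 1 else 0)" for j
  have eE: "e \<in> exps p n" unfolding exps_def e_def using m1 p2 by auto
  have "ord_monomial u n e = prod_list (map (\<lambda>j. u j ^ e j) ([1..<m] @ [m..<Suc n]))"
    unfolding ord_monomial_def using m1 mn upt_add_eq_append[of 1 m "Suc n - m"] by simp
  also have "\<dots> = prod_list (map (\<lambda>j. u j ^ e j) [1..<m]) * prod_list (map (\<lambda>j. u j ^ e j) [m..<Suc n])"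
    by simp
  also have "prod_list (map (\<lambda>j. u j ^ e j) [1..<m]) = 1"
  proof -
    have "map (\<lambda>j. u j ^ e j) [1..<m] = map (\<lambda>_. 1) [1..<m]" by (rule map_cong) (auto simp: e_def)
    moreover have "prod_list (map (\<lambda>_. (1::'a)) xs) = 1" for xs :: "nat list" by (induction xs) simp_all
    ultimately show ?thesis by metis
  qed
  also have "prod_list (map (\<lambda>j. u j ^ e j) [m..<Suc n]) = P m"
    unfolding P_def by (rule arg_cong[where f=prod_list], rule map_cong) (auto simp: e_def)
  finally have oe: "ord_monomial u n e = P m" by simp
  have "ord_monomial u n e \<noteq> 0"
  proof
    assume "ord_monomial u n e = 0"
    then have z: "0 \<in> ord_monomial u n ` exps p n" using eE by (intro image_eqI[of _ _ e]) auto
    have "\<not> dependent (ord_monomial u n ` exps p n)" using basis_part by (rule conjunct1)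
    moreover have "dependent (ord_monomial u n ` exps p n)" by (rule dependent_zero[OF z])
    ultimately show False by contradiction
  qed
  then have Pm0: "P m \<noteq> 0" using oe by simp
  have "v ^ (p - 1) * u n ^ (p - 1) * Q = v ^ (p - 1) * P (Suc m)"
    unfolding PQ mult.assoc ucent_pow[of "p - 1" Q] ..
  also have "\<dots> = scale (a m ^ (p - 1)) (u m ^ (p - 1) * P (Suc m)) + r' * P (Suc m)"
    unfolding vp distrib_right compl ..
  also have "r' * P (Suc m) = 0" by (rule annih[OF _ r']) simp
  finally have "v ^ (p - 1) * u n ^ (p - 1) * Q = scale (a m ^ (p - 1)) (P m)" using Pm by simp
  moreover have "scale (a m ^ (p - 1)) (P m) \<noteq> 0" using am Pm0 by simp
  ultimately show ?thesis by auto
qed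

end

theorem main_c:
  fixes scale :: "'k::field \<Rightarrow> 'a::ring_1 \<Rightarrow> 'a"
    and p n :: nat and u :: "nat \<Rightarrow> 'a"
  assumes h: "h1 scale p n u"
  shows "\<forall>a::nat \<Rightarrow> 'k. \<forall>v. v = (\<Sum>j\<in>{1..n}. scale (a j) (u j)) \<longrightarrow>
        (\<exists>i\<in>{1..<n}. a i \<noteq> 0) \<longrightarrow> v ^ p = 0 \<longrightarrow>
        v ^ (p - 1) * u n ^ (p - 1) \<noteq> 0 \<and>
        v ^ (p - 1) \<notin> {x * u n | x. True} \<and>
        (\<forall>f g. eval2 scale v (u n) (f + g) = eval2 scale v (u n) f + eval2 scale v (u n) g) \<and>
        (\<forall>f g. eval2 scale v (u n) (f * g) = eval2 scale v (u n) f * eval2 scale v (u n) g) \<and>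
        eval2 scale v (u n) 1 = 1 \<and>
        eval2 scale v (u n) var_s = v \<and> eval2 scale v (u n) var_t = u n \<and>
        range (eval2 scale v (u n)) = alg_gen scale {v, u n} \<and>
        {f. eval2 scale v (u n) f = 0} = ideal_gen {var_s ^ p, var_t ^ p}"
proof (intro allI impI)
  interpret h1 scale p n u by (rule h)
  fix a :: "nat \<Rightarrow> 'k" and v
  assume v: "v = (\<Sum>j\<in>{1..n}. scale (a j) (u j))" and ex: "\<exists>i\<in>{1..<n}. a i \<noteq> 0" and vp: "v ^ p = 0"
  have nz: "v ^ (p - 1) * u n ^ (p - 1) \<noteq> 0" by (rule partc_nz[OF v ex])
  have unp: "u n ^ p = 0" using n1 by (intro up) auto
  have notin: "v ^ (p - 1) \<notin> {x * u n | x. True}"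
  proof
    assume "v ^ (p - 1) \<in> {x * u n | x. True}"
    then obtain x where "v ^ (p - 1) = x * u n" by blast
    then have "v ^ (p - 1) * u n ^ (p - 1) = x * u n ^ Suc (p - 1)" by (simp add: mult.assoc)
    also have "Suc (p - 1) = p" using p2 by simp
    finally show False using nz unp by simp
  qed
  have xy: "v * u n = u n * v" using cent by simp
  have p1: "1 \<le> p" using p2 by simp
  note ctx = xy vp unp nz p1
  have E: "eval2 scale v (u n) = E v (u n)" by (simp add: fun_eq_iff eval2_E)
  show "v ^ (p - 1) * u n ^ (p - 1) \<noteq> 0 \<and>
        v ^ (p - 1) \<notin> {x * u n | x. True} \<and>
        (\<forall>f g. eval2 scale v (u n) (f + g) = eval2 scale v (u n) f + eval2 scale v (u n) g) \<and>
        (\<forall>f g. eval2 scale v (u n) (f * g) = eval2 scale v (u n) f * eval2 scale v (u n) g) \<and>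
        eval2 scale v (u n) 1 = 1 \<and>
        eval2 scale v (u n) var_s = v \<and> eval2 scale v (u n) var_t = u n \<and>
        range (eval2 scale v (u n)) = alg_gen scale {v, u n} \<and>
        {f. eval2 scale v (u n) f = 0} = ideal_gen {var_s ^ p, var_t ^ p}"
    unfolding E using nz notin E_add[OF xy] E_mult[OF xy] E_1[OF xy] E_s[OF xy] E_t[OF xy]
      E_range[OF ctx] E_ker[OF ctx] by blast
qed

theorem lemma4p2:
  fixes scale :: "'k::field \<Rightarrow> 'a::ring_1 \<Rightarrow> 'a"
    and p n :: nat and u :: "nat \<Rightarrow> 'a"
  assumes alg: "k_algebra scale"
    and closed: "alg_closed_field TYPE('k)"
    and prime_p: "prime p" and charp: "CHAR('k) = p"
    and hyp: "H1 scale p n u"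
  shows
    "(\<not> module.dependent scale (ord_monomial u n ` exps p n) \<and>
      module.span scale (ord_monomial u n ` exps p n) = UNIV \<and>
      inj_on (ord_monomial u n) (exps p n))
   \<and> (\<forall>s\<in>{1..n}. two_sided_ideal (Jset u n s) \<and>
        (\<forall>x\<in>Jset u n s. x * prod_list (map (\<lambda>j. u j ^ (p - 1)) [s..<Suc n]) = 0))
   \<and> (\<forall>a::nat \<Rightarrow> 'k. \<forall>v. v = (\<Sum>j\<in>{1..n}. scale (a j) (u j)) \<longrightarrow>
        (\<exists>i\<in>{1..<n}. a i \<noteq> 0) \<longrightarrow> v ^ p = 0 \<longrightarrow>
        v ^ (p - 1) * u n ^ (p - 1) \<noteq> 0 \<and>
        v ^ (p - 1) \<notin> {x * u n | x. True} \<and>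
        (\<forall>f g. eval2 scale v (u n) (f + g) = eval2 scale v (u n) f + eval2 scale v (u n) g) \<and>
        (\<forall>f g. eval2 scale v (u n) (f * g) = eval2 scale v (u n) f * eval2 scale v (u n) g) \<and>
        eval2 scale v (u n) 1 = 1 \<and>
        eval2 scale v (u n) var_s = v \<and> eval2 scale v (u n) var_t = u n \<and>
        range (eval2 scale v (u n)) = alg_gen scale {v, u n} \<and>
        {f. eval2 scale v (u n) f = 0} = ideal_gen {var_s ^ p, var_t ^ p})"
proof -
  have p2: "2 \<le> p" using prime_p by (rule prime_ge_2_nat)
  have h: "h1 scale p n u"
    unfolding h1_def h1_axioms_def kalg_def kalg_axioms_def
    using alg p2 hyp unfolding k_algebra_def by metis
  interpret h1 scale p n u by (rule h)
  have b: "\<forall>s\<in>{1..n}. two_sided_ideal (Jset u n s) \<and>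
        (\<forall>x\<in>Jset u n s. x * prod_list (map (\<lambda>j. u j ^ (p - 1)) [s..<Suc n]) = 0)"
  proof
    fix s assume s: "s \<in> {1..n}"
    then have s1: "1 \<le> s" by simp
    show "two_sided_ideal (Jset u n s) \<and>
        (\<forall>x\<in>Jset u n s. x * prod_list (map (\<lambda>j. u j ^ (p - 1)) [s..<Suc n]) = 0)"
      using Jid[OF s1] annih[OF s1] unfolding P_def by blast
  qed
  show ?thesis using basis_part b main_c[OF h] by blast
qed

end
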